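(* (Subject expansion.) If $\Gamma\vdash t_2:\sigma$ is derivable in $\cap J$ and $t_1\to_{d\beta} t_2$ is a non-erasing step, then $\Gamma\vdash t_1:\sigma$ is derivable in $\cap J$.
   Context: Terms $\mathtt T_J$: $t,u,r ::= x \mid \lambda x.t \mid t(u,y.r)$ ($y$ bound in $r$), up to $\alpha$-equivalence; $\{u/x\}t$ capture-avoiding substitution. List contexts $\mathtt D ::= \Diamond \mid t(u,y.\mathtt D)$. Distant beta: $\mathtt D\langle\lambda x.t\rangle(u,y.r) \mapsto_{d\beta} \{\{u/x\}\mathtt D\langle t\rangle/y\}r$ (variables bound by $\mathtt D$ not free in $u$, $x$ not in $\mathtt D$), $\to_{d\beta}$ its closure under all contexts. A step is non-erasing if the contracted redex $\mathtt D\langle\lambda x.t\rangle(u,y.r)$ satisfies $x\in\mathrm{fv}(t)$ and $y\in\mathrm{fv}(r)$. System $\cap J$: types $\sigma,\tau ::= \alpha \mid \mathcal M\to\sigma$, $\mathcal M=[\sigma_i]_{i\in I}$ a finite possibly empty multiset; $\sqcup$ multiset union; environments map variables to multisets, $\wedge$ pointwise union, $\Gamma;x:\mathcal M$ extension with $x\notin\mathrm{dom}\,\Gamma$. $\mathrm{ch}(\mathcal M)=\mathcal M$ if $\mathcal M\ne[\,]$, $\mathrm{ch}([\,])=[\tau]$ for an arbitrary $\tau$. Rules: (var) $x:[\sigma]\vdash x:\sigma$; (abs) from $\Gamma;x:\mathcal M\vdash t:\sigma$ infer $\Gamma\vdash\lambda x.t:\mathcal M\to\sigma$; (many) from $(\Gamma_i\vdash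 t:\sigma_i)_{i\in I}$, $I\ne\emptyset$, infer $\wedge_i\Gamma_i\vdash t:[\sigma_i]_{i\in I}$; (app) from $\Gamma\vdash t:\mathrm{ch}([\mathcal M_i\to\tau_i]_{i\in I})$, $\Delta\vdash u:\mathrm{ch}(\sqcup_i\mathcal M_i)$, $\Lambda;y:[\tau_i]_{i\in I}\vdash r:\sigma$ infer $\Gamma\wedge\Delta\wedge\Lambda\vdash t(u,y.r):\sigma$. *)

theory Defs
  imports Main "HOL-Library.Multiset"
begin

text \<open>App t u r stands for t(u,y.r); the variable y (index 0) is bound in r.\<close>
datatype trm = Var nat | Lam trm | App trm trm trm

fun lift :: "nat \<Rightarrow> trm \<Rightarrow> trm" where
  "lift k (Var i) = (if i < k then Var i else Var (Suc i))"
| "lift k (Lam t) = Lam (lift (Suc k) t)"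
| "lift k (App t u r) = App (lift k t) (lift k u) (lift (Suc k) r)"

definition liftn :: "nat \<Rightarrow> trm \<Rightarrow> trm" where
  "liftn m u = (lift 0 ^^ m) u"

fun subst :: "trm \<Rightarrow> nat \<Rightarrow> trm \<Rightarrow> trm" where
  "subst (Var i) k s = (if i < k then Var i else if i = k then s else Var (i - 1))"
| "subst (Lam t) k s = Lam (subst t (Suc k) (lift 0 s))"
| "subst (App t u r) k s = App (subst t k s) (subst u k s) (subst r (Suc k) (lift 0 s))"

fun loose :: "nat \<Rightarrow> trm \<Rightarrow> bool" where
  "loose n (Var i) = (i = n)"
| "loose n (Lam t) = loose (Suc n) t"
| "loose n (App t u r) = (loose n t \<or> loose n u \<or> loose (Suc n) r)"

datatype lctx = Hole | DApp trm trm lctx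

fun plug :: "lctx \<Rightarrow> trm \<Rightarrow> trm" where
  "plug Hole s = s"
| "plug (DApp t u D) s = App t u (plug D s)"

fun depth :: "lctx \<Rightarrow> nat" where
  "depth Hole = 0"
| "depth (DApp t u D) = Suc (depth D)"

text \<open>Non-erasing distant beta step, closed under all contexts:
  D<\<lambda>x.t>(u,y.r) \<mapsto> {{u/x}D<t>/y}r with x \<in> fv t and y \<in> fv r.
  The bound variables of D do not capture u (u is lifted over them).\<close>
inductive ne_dbeta :: "trm \<Rightarrow> trm \<Rightarrow> bool" where
  root: "loose 0 t \<Longrightarrow> loose 0 r \<Longrightarrow>
     ne_dbeta (App (plug D (Lam t)) u r)
              (subst r 0 (plug D (subst t 0 (liftn (depth D) u))))"
| lam: "ne_dbeta t t' \<Longrightarrow> ne_dbeta (Lam t) (Lam t')"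
| app1: "ne_dbeta t t' \<Longrightarrow> ne_dbeta (App t u r) (App t' u r)"
| app2: "ne_dbeta u u' \<Longrightarrow> ne_dbeta (App t u r) (App t u' r)"
| app3: "ne_dbeta r r' \<Longrightarrow> ne_dbeta (App t u r) (App t u r')"

datatype ty = TVar nat | Arr "ty multiset" ty

type_synonym env = "nat \<Rightarrow> ty multiset"

definition env_single :: "nat \<Rightarrow> ty \<Rightarrow> env" where
  "env_single n \<sigma> = (\<lambda>x. if x = n then {#\<sigma>#} else {#})"

definition env_union :: "env \<Rightarrow> env \<Rightarrow> env" where
  "env_union \<Gamma> \<Delta> = (\<lambda>x. \<Gamma> x + \<Delta> x)"

definition env_ext :: "ty multiset \<Rightarrow> env \<Rightarrow> env" where
  "env_ext M \<Gamma> = (\<lambda>n. case n of 0 \<Rightarrow> M | Suc k \<Rightarrow> \<Gamma> k)"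

text \<open>ch M, with the arbitrary type \<tau> made an explicit parameter.\<close>
definition ch :: "ty multiset \<Rightarrow> ty \<Rightarrow> ty multiset" where
  "ch M \<tau> = (if M = {#} then {#\<tau>#} else M)"

inductive cj_typing :: "env \<Rightarrow> trm \<Rightarrow> ty \<Rightarrow> bool"
  and cj_mtyping :: "env \<Rightarrow> trm \<Rightarrow> ty multiset \<Rightarrow> bool" where
  T_var: "cj_typing (env_single n \<sigma>) (Var n) \<sigma>"
| T_abs: "cj_typing (env_ext M \<Gamma>) t \<sigma> \<Longrightarrow> cj_typing \<Gamma> (Lam t) (Arr M \<sigma>)"
| T_many: "ps \<noteq> [] \<Longrightarrow> (\<forall>i<length ps. cj_typing (fst (ps ! i)) t (snd (ps ! i))) \<Longrightarrow>
     cj_mtyping (\<lambda>x. sum_list (map (\<lambda>p. fst p x) ps)) t (mset (map snd ps))"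
| T_app: "cj_mtyping \<Gamma> t (ch (mset (map (\<lambda>(M, \<tau>). Arr M \<tau>) ps)) \<tau>0) \<Longrightarrow>
     cj_mtyping \<Delta> u (ch (sum_list (map fst ps)) \<tau>1) \<Longrightarrow>
     cj_typing (env_ext (mset (map snd ps)) \<Lambda>) r \<sigma> \<Longrightarrow>
     cj_typing (env_union \<Gamma> (env_union \<Delta> \<Lambda>)) (App t u r) \<sigma>"

end

theory Submission
  imports Defs
begin

inductive_cases var_inv: "cj_typing \<Gamma> (Var n) \<tau>"
inductive_cases lam_inv: "cj_typing \<Gamma> (Lam t) \<tau>"
inductive_cases app_inv: "cj_typing \<Gamma> (App t u r) \<tau>"
inductive_cases m_inv: "cj_mtyping \<Gamma> t N"

lemma mtyping_single: "cj_typing \<Gamma> t \<tau> \<Longrightarrow> cj_mtyping \<Gamma> t {#\<tau>#}"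
proof -
  assume h: "cj_typing \<Gamma> t \<tau>"
  have "cj_mtyping (\<lambda>x. sum_list (map (\<lambda>p. fst p x) [(\<Gamma>,\<tau>)])) t (mset (map snd [(\<Gamma>,\<tau>)]))"
    by (rule T_many) (use h in auto)
  thus ?thesis by simp
qed

lemma mtyping_union: "cj_mtyping \<Gamma>1 t N1 \<Longrightarrow> cj_mtyping \<Gamma>2 t N2 \<Longrightarrow> cj_mtyping (env_union \<Gamma>1 \<Gamma>2) t (N1+N2)"
proof -
  assume "cj_mtyping \<Gamma>1 t N1" "cj_mtyping \<Gamma>2 t N2"
  then obtain ps qs where ps: "ps \<noteq> []" "\<forall>i<length ps. cj_typing (fst (ps!i)) t (snd (ps!i))"
     "\<Gamma>1 = (\<lambda>x. sum_list (map (\<lambda>p. fst p x) ps))" "N1 = mset (map snd ps)"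
   and qs: "qs \<noteq> []" "\<forall>i<length qs. cj_typing (fst (qs!i)) t (snd (qs!i))"
     "\<Gamma>2 = (\<lambda>x. sum_list (map (\<lambda>p. fst p x) qs))" "N2 = mset (map snd qs)"
    by (auto elim!: m_inv)
  have "cj_mtyping (\<lambda>x. sum_list (map (\<lambda>p. fst p x) (ps@qs))) t (mset (map snd (ps@qs)))"
    apply (rule T_many) using ps qs by (auto simp: nth_append)
  thus ?thesis using ps qs by (simp add: env_union_def)
qed

lemma mtyping_induct[consumes 1]:
  assumes "cj_mtyping \<Gamma> t N"
   and "\<And>\<Gamma> \<tau>. cj_typing \<Gamma> t \<tau> \<Longrightarrow> P \<Gamma> {#\<tau>#}"
   and "\<And>\<Gamma>1 \<Gamma>2 N1 N2. P \<Gamma>1 N1 \<Longrightarrow> P \<Gamma>2 N2 \<Longrightarrow> P (env_union \<Gamma>1 \<Gamma>2) (N1+N2)"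
  shows "P \<Gamma> N"
proof -
  obtain ps where ps: "ps \<noteq> []" "\<forall>i<length ps. cj_typing (fst (ps!i)) t (snd (ps!i))"
     "\<Gamma> = (\<lambda>x. sum_list (map (\<lambda>p. fst p x) ps))" "N = mset (map snd ps)"
    using assms(1) by (auto elim!: m_inv)
  have "ps \<noteq> [] \<Longrightarrow> \<forall>p\<in>set ps. cj_typing (fst p) t (snd p) \<Longrightarrow> P (\<lambda>x. sum_list (map (\<lambda>p. fst p x) ps)) (mset (map snd ps))"
  proof (induction ps)
    case Nil thus ?case by simp
  next
    case (Cons p ps)
    show ?case
    proof (cases "ps = []")
      case True
      with Cons.prems have "cj_typing (fst p) t (snd p)" by simp
      from assms(2)[OF this] True show ?thesis by simp
    next
      case False
      with Cons have 1: "P (\<lambda>x. sum_list (map (\<lambda>p. fst p x) ps)) (mset (map snd ps))" by simp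
      from Cons.prems have "cj_typing (fst p) t (snd p)" by simp
      from assms(3)[OF assms(2)[OF this] 1] show ?thesis by (simp add: env_union_def)
    qed
  qed
  moreover have "\<forall>p\<in>set ps. cj_typing (fst p) t (snd p)" using ps(2) by (metis in_set_conv_nth)
  ultimately show ?thesis using ps by simp
qed

lemma mtyping_nonempty: "cj_mtyping \<Gamma> t N \<Longrightarrow> N \<noteq> {#}"
  by (induction rule: mtyping_induct) auto

lemma ch_id: "M \<noteq> {#} \<Longrightarrow> ch M \<tau> = M"
  by (simp add: ch_def)

lemma sum_list_ne: "p \<in> set ps \<Longrightarrow> f p \<noteq> ({#}::'a multiset) \<Longrightarrow> sum_list (map f ps) \<noteq> {#}"
  by (induction ps) auto

lemma relevance:
  "(cj_typing \<Gamma> t \<tau> \<longrightarrow> (\<forall>n. loose n t \<longrightarrow> \<Gamma> n \<noteq> {#})) \<and>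
   (cj_mtyping \<Gamma> t N \<longrightarrow> (\<forall>n. loose n t \<longrightarrow> \<Gamma> n \<noteq> {#}))"
proof (induction rule: cj_typing_cj_mtyping.induct)
  case (T_many ps t)
  show ?case
  proof (intro allI impI)
    fix n assume "loose n t"
    with T_many have "fst (ps!0) n \<noteq> {#}" by auto
    moreover have "ps ! 0 \<in> set ps" using T_many(1) by simp
    ultimately show "(\<lambda>x. sum_list (map (\<lambda>p. fst p x) ps)) n \<noteq> {#}"
      using sum_list_ne[of "ps!0" ps "\<lambda>p. fst p n"] by auto
  qed
qed (auto simp: env_single_def env_ext_def env_union_def)

definition unshift :: "nat \<Rightarrow> env \<Rightarrow> env" where
  "unshift k \<Gamma> = (\<lambda>i. if i < k then \<Gamma> i else \<Gamma> (Suc i))"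

lemma unshift_union[simp]: "unshift k (env_union \<Gamma> \<Delta>) = env_union (unshift k \<Gamma>) (unshift k \<Delta>)"
  by (auto simp: unshift_def env_union_def)

lemma unshift_ext[simp]: "unshift (Suc k) (env_ext M \<Gamma>) = env_ext M (unshift k \<Gamma>)"
  by (auto simp: unshift_def env_ext_def fun_eq_iff split: nat.split)

lemma env_ext_Suc[simp]: "env_ext M \<Gamma> (Suc k) = \<Gamma> k" and env_ext_0[simp]: "env_ext M \<Gamma> 0 = M"
  by (auto simp: env_ext_def)

lemma env_union_empty[simp]: "(env_union \<Gamma> \<Delta> k = {#}) = (\<Gamma> k = {#} \<and> \<Delta> k = {#})"
  by (simp add: env_union_def)

lemma unlift_m_gen:
  assumes "\<And>\<Gamma> \<tau>. cj_typing \<Gamma> (lift k v) \<tau> \<Longrightarrow> \<Gamma> k = {#} \<and> cj_typing (unshift k \<Gamma>) v \<tau>"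
    and "cj_mtyping \<Gamma> (lift k v) N"
  shows "\<Gamma> k = {#} \<and> cj_mtyping (unshift k \<Gamma>) v N"
  using assms(2)
proof (induction rule: mtyping_induct)
  case (1 \<Gamma> \<tau>)
  then show ?case using assms(1) mtyping_single by blast
next
  case (2 \<Gamma>1 \<Gamma>2 N1 N2)
  then show ?case by (auto intro: mtyping_union)
qed

lemma unlift: "cj_typing \<Gamma> (lift k v) \<tau> \<Longrightarrow> \<Gamma> k = {#} \<and> cj_typing (unshift k \<Gamma>) v \<tau>"
proof (induction v arbitrary: \<Gamma> k \<tau>)
  case (Var i)
  then have G: "\<Gamma> = env_single (if i < k then i else Suc i) \<tau>" by (auto elim: var_inv split: if_splits)
  have "unshift k \<Gamma> = env_single i \<tau>" unfolding G by (auto simp: unshift_def env_single_def fun_eq_iff)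
  moreover have "\<Gamma> k = {#}" using G by (simp add: env_single_def)
  ultimately show ?case using T_var by metis
next
  case (Lam v)
  from Lam.prems obtain M \<sigma> where t: "\<tau> = Arr M \<sigma>" "cj_typing (env_ext M \<Gamma>) (lift (Suc k) v) \<sigma>"
    by (auto elim: lam_inv)
  from Lam.IH[OF t(2)] show ?case using t by (auto intro: T_abs)
next
  case (App a b c)
  from App.prems obtain \<Gamma>1 \<Delta> \<Lambda> ps \<tau>0 \<tau>1 where
    G: "\<Gamma> = env_union \<Gamma>1 (env_union \<Delta> \<Lambda>)"
    and ha: "cj_mtyping \<Gamma>1 (lift k a) (ch (mset (map (\<lambda>(M, \<tau>). Arr M \<tau>) ps)) \<tau>0)"
    and hb: "cj_mtyping \<Delta> (lift k b) (ch (sum_list (map fst ps)) \<tau>1)"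
    and hc: "cj_typing (env_ext (mset (map snd ps)) \<Lambda>) (lift (Suc k) c) \<tau>"
    by (auto elim: app_inv)
  note a = unlift_m_gen[OF App.IH(1) ha]
  note b = unlift_m_gen[OF App.IH(2) hb]
  note c = App.IH(3)[OF hc]
  show ?case using a b c G by (auto intro: T_app)
qed

lemma unlift_m: "cj_mtyping \<Gamma> (lift k v) N \<Longrightarrow> \<Gamma> k = {#} \<and> cj_mtyping (unshift k \<Gamma>) v N"
  using unlift_m_gen unlift by blast

definition ins :: "nat \<Rightarrow> ty multiset \<Rightarrow> env \<Rightarrow> env" where
  "ins k M \<Gamma> = (\<lambda>i. if i < k then \<Gamma> i else if i = k then M else \<Gamma> (i - 1))"

definition mt0 :: "env \<Rightarrow> trm \<Rightarrow> ty multiset \<Rightarrow> bool" where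
  "mt0 \<Delta> s M = (if M = {#} then \<Delta> = (\<lambda>_. {#}) else cj_mtyping \<Delta> s M)"

lemma ins_union: "ins k (M1+M2) (env_union \<Gamma>1 \<Gamma>2) = env_union (ins k M1 \<Gamma>1) (ins k M2 \<Gamma>2)"
  by (auto simp: ins_def env_union_def)

lemma ins_Suc: "ins (Suc k) M \<Gamma> = env_ext (\<Gamma> 0) (ins k M (\<lambda>i. \<Gamma> (Suc i)))"
  by (auto simp: ins_def env_ext_def fun_eq_iff split: nat.split)

lemma ins_0: "ins 0 M \<Gamma> = env_ext M \<Gamma>"
  by (auto simp: ins_def env_ext_def fun_eq_iff split: nat.split)

lemma unshift_0: "unshift 0 \<Gamma> = (\<lambda>i. \<Gamma> (Suc i))"
  by (simp add: unshift_def)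

lemma mt0_union: "mt0 \<Delta>1 s M1 \<Longrightarrow> mt0 \<Delta>2 s M2 \<Longrightarrow> mt0 (env_union \<Delta>1 \<Delta>2) s (M1+M2)"
  using mtyping_union[of \<Delta>1 s M1 \<Delta>2 M2]
  by (cases "M1 = {#}"; cases "M2 = {#}") (auto simp: mt0_def env_union_def)

lemma mt0_unlift: "mt0 \<Delta> (lift 0 s) M \<Longrightarrow> \<Delta> 0 = {#} \<and> mt0 (\<lambda>i. \<Delta> (Suc i)) s M"
  using unlift_m[of \<Delta> 0 s M] by (auto simp: mt0_def unshift_0 split: if_splits)

lemma ext_split: "env_ext N \<Gamma> = env_union A B \<Longrightarrow> \<Gamma> = env_union (\<lambda>i. A (Suc i)) (\<lambda>i. B (Suc i)) \<and> N = A 0 + B 0"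
  by (auto simp: env_union_def env_ext_def fun_eq_iff split: nat.splits)

lemma env_union_ac: "env_union (env_union A B) C = env_union A (env_union B C)"
   "env_union A B = env_union B A" "env_union A (env_union B C) = env_union B (env_union A C)"
  by (auto simp: env_union_def add_ac)

lemma antisubst_m_gen:
  assumes "\<And>\<Gamma> \<tau>. cj_typing \<Gamma> (subst t k s) \<tau> \<Longrightarrow> \<exists>M \<Gamma>1 \<Delta>. cj_typing (ins k M \<Gamma>1) t \<tau> \<and> \<Gamma> = env_union \<Gamma>1 \<Delta> \<and> mt0 \<Delta> s M"
    and "cj_mtyping \<Gamma> (subst t k s) N"
  shows "\<exists>M \<Gamma>1 \<Delta>. cj_mtyping (ins k M \<Gamma>1) t N \<and> \<Gamma> = env_union \<Gamma>1 \<Delta> \<and> mt0 \<Delta> s M"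
  using assms(2)
proof (induction rule: mtyping_induct)
  case (1 \<Gamma> \<tau>)
  then show ?case using assms(1) mtyping_single by blast
next
  case (2 \<Gamma>1 \<Gamma>2 N1 N2)
  then obtain M1 G1 D1 M2 G2 D2 where
    a: "cj_mtyping (ins k M1 G1) t N1" "\<Gamma>1 = env_union G1 D1" "mt0 D1 s M1"
    and b: "cj_mtyping (ins k M2 G2) t N2" "\<Gamma>2 = env_union G2 D2" "mt0 D2 s M2" by blast
  have "cj_mtyping (ins k (M1+M2) (env_union G1 G2)) t (N1+N2)"
    using mtyping_union[OF a(1) b(1)] by (simp add: ins_union)
  moreover have "env_union \<Gamma>1 \<Gamma>2 = env_union (env_union G1 G2) (env_union D1 D2)"
    using a b by (simp add: env_union_ac)
  moreover have "mt0 (env_union D1 D2) s (M1+M2)" using mt0_union a b by blast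
  ultimately show ?case by blast
qed

lemma antisubst:
  "cj_typing \<Gamma> (subst t k s) \<tau> \<Longrightarrow> \<exists>M \<Gamma>1 \<Delta>. cj_typing (ins k M \<Gamma>1) t \<tau> \<and> \<Gamma> = env_union \<Gamma>1 \<Delta> \<and> mt0 \<Delta> s M"
proof (induction t arbitrary: \<Gamma> k s \<tau>)
  case (Var i)
  consider "i < k" | "i = k" | "i > k" by linarith
  then show ?case
  proof cases
    case 1
    with Var have G: "\<Gamma> = env_single i \<tau>" by (auto elim: var_inv)
    have "ins k {#} \<Gamma> = env_single i \<tau>" using 1 by (auto simp: G ins_def env_single_def fun_eq_iff)
    moreover have "\<Gamma> = env_union \<Gamma> (\<lambda>_. {#})" by (simp add: env_union_def)
    moreover have "mt0 (\<lambda>_. {#}) s {#}" by (simp add: mt0_def)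
    ultimately show ?thesis using T_var by metis
  next
    case 2
    with Var have h: "cj_typing \<Gamma> s \<tau>" by simp
    have "ins k {#\<tau>#} (\<lambda>_. {#}) = env_single i \<tau>" using 2 by (auto simp: ins_def env_single_def fun_eq_iff)
    moreover have "\<Gamma> = env_union (\<lambda>_. {#}) \<Gamma>" by (simp add: env_union_def)
    moreover have "mt0 \<Gamma> s {#\<tau>#}" using mtyping_single[OF h] by (simp add: mt0_def)
    ultimately show ?thesis using T_var by metis
  next
    case 3
    with Var have G: "\<Gamma> = env_single (i - 1) \<tau>" by (auto elim: var_inv)
    have "ins k {#} \<Gamma> = env_single i \<tau>" using 3 by (auto simp: G ins_def env_single_def fun_eq_iff)
    moreover have "\<Gamma> = env_union \<Gamma> (\<lambda>_. {#})" by (simp add: env_union_def)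
    moreover have "mt0 (\<lambda>_. {#}) s {#}" by (simp add: mt0_def)
    ultimately show ?thesis using T_var by metis
  qed
next
  case (Lam t)
  from Lam.prems obtain N \<sigma> where t: "\<tau> = Arr N \<sigma>" "cj_typing (env_ext N \<Gamma>) (subst t (Suc k) (lift 0 s)) \<sigma>"
    by (auto elim: lam_inv)
  from Lam.IH[OF t(2)] obtain M G D where
    h: "cj_typing (ins (Suc k) M G) t \<sigma>" "env_ext N \<Gamma> = env_union G D" "mt0 D (lift 0 s) M" by blast
  from mt0_unlift[OF h(3)] have d: "D 0 = {#}" "mt0 (\<lambda>i. D (Suc i)) s M" by auto
  from ext_split[OF h(2)] d have e: "\<Gamma> = env_union (\<lambda>i. G (Suc i)) (\<lambda>i. D (Suc i))" "N = G 0" by auto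
  from h(1) have "cj_typing (env_ext N (ins k M (\<lambda>i. G (Suc i)))) t \<sigma>" by (simp only: ins_Suc e(2))
  then have "cj_typing (ins k M (\<lambda>i. G (Suc i))) (Lam t) \<tau>" using t(1) by (auto intro: T_abs)
  then show ?case using e(1) d(2) by blast
next
  case (App a b c)
  from App.prems obtain \<Gamma>a \<Delta> \<Lambda> ps \<tau>0 \<tau>1 where
    G: "\<Gamma> = env_union \<Gamma>a (env_union \<Delta> \<Lambda>)"
    and ha: "cj_mtyping \<Gamma>a (subst a k s) (ch (mset (map (\<lambda>(M, \<tau>). Arr M \<tau>) ps)) \<tau>0)"
    and hb: "cj_mtyping \<Delta> (subst b k s) (ch (sum_list (map fst ps)) \<tau>1)"
    and hc: "cj_typing (env_ext (mset (map snd ps)) \<Lambda>) (subst c (Suc k) (lift 0 s)) \<tau>"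
    by (auto elim: app_inv)
  from antisubst_m_gen[OF App.IH(1) ha] obtain Ma Ga Da where
    a: "cj_mtyping (ins k Ma Ga) a (ch (mset (map (\<lambda>(M, \<tau>). Arr M \<tau>) ps)) \<tau>0)" "\<Gamma>a = env_union Ga Da" "mt0 Da s Ma" by blast
  from antisubst_m_gen[OF App.IH(2) hb] obtain Mb Gb Db where
    b: "cj_mtyping (ins k Mb Gb) b (ch (sum_list (map fst ps)) \<tau>1)" "\<Delta> = env_union Gb Db" "mt0 Db s Mb" by blast
  from App.IH(3)[OF hc] obtain Mc Gc Dc where
    c: "cj_typing (ins (Suc k) Mc Gc) c \<tau>" "env_ext (mset (map snd ps)) \<Lambda> = env_union Gc Dc" "mt0 Dc (lift 0 s) Mc" by blast
  from mt0_unlift[OF c(3)] have d: "Dc 0 = {#}" "mt0 (\<lambda>i. Dc (Suc i)) s Mc" by auto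
  from ext_split[OF c(2)] d have e: "\<Lambda> = env_union (\<lambda>i. Gc (Suc i)) (\<lambda>i. Dc (Suc i))" "mset (map snd ps) = Gc 0" by auto
  from c(1) have c': "cj_typing (env_ext (mset (map snd ps)) (ins k Mc (\<lambda>i. Gc (Suc i)))) c \<tau>" by (simp only: ins_Suc e(2))
  have "cj_typing (env_union (ins k Ma Ga) (env_union (ins k Mb Gb) (ins k Mc (\<lambda>i. Gc (Suc i))))) (App a b c) \<tau>"
    by (rule T_app[OF a(1) b(1) c'])
  then have "cj_typing (ins k (Ma + (Mb + Mc)) (env_union Ga (env_union Gb (\<lambda>i. Gc (Suc i))))) (App a b c) \<tau>"
    by (simp add: ins_union)
  moreover have "mt0 (env_union Da (env_union Db (\<lambda>i. Dc (Suc i)))) s (Ma + (Mb + Mc))"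
    using a(3) b(3) d(2) by (intro mt0_union)
  moreover have "\<Gamma> = env_union (env_union Ga (env_union Gb (\<lambda>i. Gc (Suc i)))) (env_union Da (env_union Db (\<lambda>i. Dc (Suc i))))"
    using G a(2) b(2) e(1) by (auto simp: env_union_def fun_eq_iff add_ac)
  ultimately show ?case by blast
qed

lemma liftn_Suc: "liftn (Suc d) v = liftn d (lift 0 v)"
  by (simp add: liftn_def funpow_swap1)

lemma liftn_0: "liftn 0 v = v"
  by (simp add: liftn_def)

lemma env_ext_eta: "env_ext (\<Gamma> 0) (\<lambda>i. \<Gamma> (Suc i)) = \<Gamma>"
  by (auto simp: env_ext_def fun_eq_iff split: nat.split)

lemma ins_0_at: "ins 0 M \<Gamma> 0 = M"
  by (simp add: ins_def)

lemma plug_exp: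
  "loose 0 t \<Longrightarrow> cj_typing \<Delta> (plug D (subst t 0 (liftn (depth D) v))) \<tau> \<Longrightarrow>
   \<exists>M' \<Gamma>1 \<Delta>1. cj_typing \<Gamma>1 (plug D (Lam t)) (Arr M' \<tau>) \<and> cj_mtyping \<Delta>1 v M' \<and> \<Delta> = env_union \<Gamma>1 \<Delta>1"
proof (induction D arbitrary: \<Delta> \<tau> v)
  case Hole
  then have "cj_typing \<Delta> (subst t 0 v) \<tau>" by (simp add: liftn_0)
  from antisubst[OF this] obtain M G Dd where
    h: "cj_typing (ins 0 M G) t \<tau>" "\<Delta> = env_union G Dd" "mt0 Dd v M" by blast
  have "M \<noteq> {#}" using relevance h(1) Hole(1) ins_0_at by metis
  with h(3) have m: "cj_mtyping Dd v M" by (simp add: mt0_def)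
  from h(1) have "cj_typing G (Lam t) (Arr M \<tau>)" by (simp add: ins_0 T_abs)
  then show ?case using m h(2) by auto
next
  case (DApp a b D)
  from DApp.prems(2) obtain \<Gamma>a \<Delta>b \<Lambda> ps \<tau>0 \<tau>1 where
    G: "\<Delta> = env_union \<Gamma>a (env_union \<Delta>b \<Lambda>)"
    and ha: "cj_mtyping \<Gamma>a a (ch (mset (map (\<lambda>(M, \<tau>). Arr M \<tau>) ps)) \<tau>0)"
    and hb: "cj_mtyping \<Delta>b b (ch (sum_list (map fst ps)) \<tau>1)"
    and hc: "cj_typing (env_ext (mset (map snd ps)) \<Lambda>) (plug D (subst t 0 (liftn (Suc (depth D)) v))) \<tau>"
    by (auto elim: app_inv)
  from hc have hc': "cj_typing (env_ext (mset (map snd ps)) \<Lambda>) (plug D (subst t 0 (liftn (depth D) (lift 0 v)))) \<tau>"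
    by (simp add: liftn_Suc)
  from DApp.IH[OF DApp.prems(1) hc'] obtain M' G1 D1 where
    h: "cj_typing G1 (plug D (Lam t)) (Arr M' \<tau>)" "cj_mtyping D1 (lift 0 v) M'"
       "env_ext (mset (map snd ps)) \<Lambda> = env_union G1 D1" by blast
  from unlift_m[OF h(2)] have d: "D1 0 = {#}" "cj_mtyping (\<lambda>i. D1 (Suc i)) v M'" by (auto simp: unshift_0)
  from ext_split[OF h(3)] d have e: "\<Lambda> = env_union (\<lambda>i. G1 (Suc i)) (\<lambda>i. D1 (Suc i))" "mset (map snd ps) = G1 0" by auto
  have h1: "cj_typing (env_ext (mset (map snd ps)) (\<lambda>i. G1 (Suc i))) (plug D (Lam t)) (Arr M' \<tau>)"
    using h(1) by (simp only: e(2) env_ext_eta)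
  have "cj_typing (env_union \<Gamma>a (env_union \<Delta>b (\<lambda>i. G1 (Suc i)))) (App a b (plug D (Lam t))) (Arr M' \<tau>)"
    by (rule T_app[OF ha hb h1])
  moreover have "\<Delta> = env_union (env_union \<Gamma>a (env_union \<Delta>b (\<lambda>i. G1 (Suc i)))) (\<lambda>i. D1 (Suc i))"
    using G e(1) by (auto simp: env_union_def fun_eq_iff add_ac)
  ultimately show ?case using d(2) by auto
qed

lemma plug_exp_m:
  assumes "loose 0 t" "cj_mtyping \<Delta> (plug D (subst t 0 (liftn (depth D) v))) M"
  shows "\<exists>ps \<Gamma>a \<Delta>b. mset (map snd ps) = M \<and> cj_mtyping \<Gamma>a (plug D (Lam t)) (mset (map (\<lambda>(M,\<tau>). Arr M \<tau>) ps))
     \<and> cj_mtyping \<Delta>b v (sum_list (map fst ps)) \<and> \<Delta> = env_union \<Gamma>a \<Delta>b"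
  using assms(2)
proof (induction rule: mtyping_induct)
  case (1 \<Gamma> \<tau>)
  from plug_exp[OF assms(1) 1] obtain M' G1 D1 where
    h: "cj_typing G1 (plug D (Lam t)) (Arr M' \<tau>)" "cj_mtyping D1 v M'" "\<Gamma> = env_union G1 D1" by blast
  have "mset (map snd [(M',\<tau>)]) = {#\<tau>#}" by simp
  moreover have "cj_mtyping G1 (plug D (Lam t)) (mset (map (\<lambda>(M,\<tau>). Arr M \<tau>) [(M',\<tau>)]))"
    using mtyping_single[OF h(1)] by simp
  moreover have "cj_mtyping D1 v (sum_list (map fst [(M',\<tau>)]))" using h(2) by simp
  ultimately show ?case using h(3) by (intro exI[of _ "[(M',\<tau>)]"] exI[of _ G1] exI[of _ D1]) simp
next
  case (2 \<Gamma>1 \<Gamma>2 N1 N2)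
  then obtain ps1 Ga1 Db1 ps2 Ga2 Db2 where
    a: "mset (map snd ps1) = N1" "cj_mtyping Ga1 (plug D (Lam t)) (mset (map (\<lambda>(M,\<tau>). Arr M \<tau>) ps1))"
       "cj_mtyping Db1 v (sum_list (map fst ps1))" "\<Gamma>1 = env_union Ga1 Db1"
    and b: "mset (map snd ps2) = N2" "cj_mtyping Ga2 (plug D (Lam t)) (mset (map (\<lambda>(M,\<tau>). Arr M \<tau>) ps2))"
       "cj_mtyping Db2 v (sum_list (map fst ps2))" "\<Gamma>2 = env_union Ga2 Db2" by blast
  have "mset (map snd (ps1@ps2)) = N1 + N2" using a b by simp
  moreover have "cj_mtyping (env_union Ga1 Ga2) (plug D (Lam t)) (mset (map (\<lambda>(M,\<tau>). Arr M \<tau>) (ps1@ps2)))"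
    using mtyping_union[OF a(2) b(2)] by simp
  moreover have "cj_mtyping (env_union Db1 Db2) v (sum_list (map fst (ps1@ps2)))"
    using mtyping_union[OF a(3) b(3)] by simp
  moreover have "env_union \<Gamma>1 \<Gamma>2 = env_union (env_union Ga1 Ga2) (env_union Db1 Db2)"
    using a b by (auto simp: env_union_def fun_eq_iff add_ac)
  ultimately show ?case by (intro exI[of _ "ps1@ps2"]) blast
qed

lemma root_exp:
  assumes "loose 0 t" "loose 0 r"
    and "cj_typing \<Gamma> (subst r 0 (plug D (subst t 0 (liftn (depth D) u)))) \<sigma>"
  shows "cj_typing \<Gamma> (App (plug D (Lam t)) u r) \<sigma>"
proof -
  from antisubst[OF assms(3)] obtain M G Dd where
    h: "cj_typing (ins 0 M G) r \<sigma>" "\<Gamma> = env_union G Dd" "mt0 Dd (plug D (subst t 0 (liftn (depth D) u))) M" by blast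
  have "M \<noteq> {#}" using relevance h(1) assms(2) ins_0_at by metis
  with h(3) have m: "cj_mtyping Dd (plug D (subst t 0 (liftn (depth D) u))) M" by (simp add: mt0_def)
  from plug_exp_m[OF assms(1) m] obtain ps \<Gamma>a \<Delta>b where
    p: "mset (map snd ps) = M" "cj_mtyping \<Gamma>a (plug D (Lam t)) (mset (map (\<lambda>(M,\<tau>). Arr M \<tau>) ps))"
       "cj_mtyping \<Delta>b u (sum_list (map fst ps))" "Dd = env_union \<Gamma>a \<Delta>b" by blast
  have pa: "cj_mtyping \<Gamma>a (plug D (Lam t)) (ch (mset (map (\<lambda>(M,\<tau>). Arr M \<tau>) ps)) (TVar 0))"
    using p(2) mtyping_nonempty ch_id by metis
  have pb: "cj_mtyping \<Delta>b u (ch (sum_list (map fst ps)) (TVar 0))"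
    using p(3) mtyping_nonempty ch_id by metis
  have pc: "cj_typing (env_ext (mset (map snd ps)) G) r \<sigma>" using h(1) p(1) by (simp add: ins_0)
  have "cj_typing (env_union \<Gamma>a (env_union \<Delta>b G)) (App (plug D (Lam t)) u r) \<sigma>"
    by (rule T_app[OF pa pb pc])
  moreover have "\<Gamma> = env_union \<Gamma>a (env_union \<Delta>b G)"
    using h(2) p(4) by (auto simp: env_union_def fun_eq_iff add_ac)
  ultimately show ?thesis by simp
qed

lemma m_expand:
  assumes "\<And>\<Gamma> \<sigma>. cj_typing \<Gamma> b \<sigma> \<Longrightarrow> cj_typing \<Gamma> a \<sigma>" "cj_mtyping \<Gamma> b N"
  shows "cj_mtyping \<Gamma> a N"
  using assms(2)
proof (induction rule: mtyping_induct)
  case (1 \<Gamma> \<tau>)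
  then show ?case using assms(1) mtyping_single by blast
next
  case (2 \<Gamma>1 \<Gamma>2 N1 N2)
  then show ?case using mtyping_union by blast
qed

theorem mainTheorem11:
  assumes "cj_typing \<Gamma> t2 \<sigma>"
    and "ne_dbeta t1 t2"
  shows "cj_typing \<Gamma> t1 \<sigma>"
  using assms(2,1)
proof (induction arbitrary: \<Gamma> \<sigma> rule: ne_dbeta.induct)
  case (root t r D u)
  then show ?case using root_exp by blast
next
  case (lam t t')
  from lam.prems obtain M \<tau> where "\<sigma> = Arr M \<tau>" "cj_typing (env_ext M \<Gamma>) t' \<tau>"
    by (auto elim: lam_inv)
  then show ?case using lam.IH T_abs by blast
next
  case (app1 t t' u r)
  from app1.prems obtain \<Gamma>a \<Delta> \<Lambda> ps \<tau>0 \<tau>1 where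
    G: "\<Gamma> = env_union \<Gamma>a (env_union \<Delta> \<Lambda>)"
    and ha: "cj_mtyping \<Gamma>a t' (ch (mset (map (\<lambda>(M, \<tau>). Arr M \<tau>) ps)) \<tau>0)"
    and hb: "cj_mtyping \<Delta> u (ch (sum_list (map fst ps)) \<tau>1)"
    and hc: "cj_typing (env_ext (mset (map snd ps)) \<Lambda>) r \<sigma>"
    by (auto elim: app_inv)
  have "cj_mtyping \<Gamma>a t (ch (mset (map (\<lambda>(M, \<tau>). Arr M \<tau>) ps)) \<tau>0)"
    by (rule m_expand[OF app1.IH ha])
  from T_app[OF this hb hc] G show ?case by simp
next
  case (app2 u u' t r)
  from app2.prems obtain \<Gamma>a \<Delta> \<Lambda> ps \<tau>0 \<tau>1 where
    G: "\<Gamma> = env_union \<Gamma>a (env_union \<Delta> \<Lambda>)"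
    and ha: "cj_mtyping \<Gamma>a t (ch (mset (map (\<lambda>(M, \<tau>). Arr M \<tau>) ps)) \<tau>0)"
    and hb: "cj_mtyping \<Delta> u' (ch (sum_list (map fst ps)) \<tau>1)"
    and hc: "cj_typing (env_ext (mset (map snd ps)) \<Lambda>) r \<sigma>"
    by (auto elim: app_inv)
  have "cj_mtyping \<Delta> u (ch (sum_list (map fst ps)) \<tau>1)"
    by (rule m_expand[OF app2.IH hb])
  from T_app[OF ha this hc] G show ?case by simp
next
  case (app3 r r' t u)
  from app3.prems obtain \<Gamma>a \<Delta> \<Lambda> ps \<tau>0 \<tau>1 where
    G: "\<Gamma> = env_union \<Gamma>a (env_union \<Delta> \<Lambda>)"
    and ha: "cj_mtyping \<Gamma>a t (ch (mset (map (\<lambda>(M, \<tau>). Arr M \<tau>) ps)) \<tau>0)"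
    and hb: "cj_mtyping \<Delta> u (ch (sum_list (map fst ps)) \<tau>1)"
    and hc: "cj_typing (env_ext (mset (map snd ps)) \<Lambda>) r' \<sigma>"
    by (auto elim: app_inv)
  from T_app[OF ha hb app3.IH[OF hc]] G show ?case by simp
qed

end
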